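(* Let $\tau\in(0,1]$ and suppose $k\,\alpha^{(2-\tau)d}\ge 2$. Let $u,v\in V$ be distinct with $|\Gamma(u)\cap\Gamma(v)|\ge\tau d$. Then, under the Fast-Filter model described in the context, with probability at least $1/2$ there exists $i\in[k]$ with $u\in S_i$ and $v\in S_i$.
   Context: Let $G=(U,V,E)$ be a bipartite graph with $|U|=M$ and $|V|=N$. For $v\in V$ let $\Gamma(v)\subseteq U$ be its set of neighbours, and assume $|\Gamma(v)|=d\ge 1$ for every $v\in V$. Let $k=2^{m}$ and $\alpha=2^{-r}$, where $m,r$ are positive integers. Identify $[k]=\{1,\dots,k\}$ bijectively with the vector space $\mathrm{GF}(2)^m$ (for instance via the binary representation of $i-1$). Fast-Filter model: for each $u\in U$, independently draw a uniformly random matrix $A'_u\in\mathrm{GF}(2)^{r\times m}$ and a uniformly random vector $b'_u\in\mathrm{GF}(2)^{r}$; all of these are mutually independent. For $v\in V$, let $A^v$ be the $(dr)\times m$ matrix obtained by stacking the matrices $A'_u$, $u\in\Gamma(v)$, in a fixed order, and let $b^v\in\mathrm{GF}(2)^{dr}$ be obtained by stacking the $b'_u$, $u\in\Gamma(v)$, in the same order. For $i\in[k]$ (viewed as a vector in $\mathrm{GF}(2)^m$), the survival set is $S_i=\{v\in V: A^v i+b^v=0\}$, with arithmetic over $\mathrm{GF}(2)$. *)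

theory Defs
  imports "HOL-Probability.Probability" "HOL-Library.Z2"
begin

text \<open>A matrix in GF(2)^(r x m) is a function
  nat => nat => bit vanishing outside rows 0..<r and columns 0..<m;
  a vector in GF(2)^r is a function nat => bit vanishing outside 0..<r.\<close>

definition gf2_mats :: "nat \<Rightarrow> nat \<Rightarrow> (nat \<Rightarrow> nat \<Rightarrow> bit) set" where
  "gf2_mats r m = {A. \<forall>j l. A j l \<noteq> 0 \<longrightarrow> j < r \<and> l < m}"

definition gf2_vecs :: "nat \<Rightarrow> (nat \<Rightarrow> bit) set" where
  "gf2_vecs r = {b. \<forall>j. b j \<noteq> 0 \<longrightarrow> j < r}"

text \<open>Identification of i in [k] = {1..2^m} with GF(2)^m via binary representation of i-1.\<close>
definition idx_vec :: "nat \<Rightarrow> nat \<Rightarrow> nat \<Rightarrow> bit" where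
  "idx_vec m i l = (if l < m \<and> odd ((i - 1) div 2 ^ l) then 1 else 0)"

text \<open>Sample space of the Fast-Filter model: for each left vertex w in U a pair
  (A'_w, b'_w); uniform distribution on this product = independent uniform draws.\<close>
definition ff_space :: "'a set \<Rightarrow> nat \<Rightarrow> nat \<Rightarrow> ('a \<Rightarrow> (nat \<Rightarrow> nat \<Rightarrow> bit) \<times> (nat \<Rightarrow> bit)) set" where
  "ff_space U r m = PiE U (\<lambda>_. gf2_mats r m \<times> gf2_vecs r)"

definition ff_pmf :: "'a set \<Rightarrow> nat \<Rightarrow> nat \<Rightarrow> ('a \<Rightarrow> (nat \<Rightarrow> nat \<Rightarrow> bit) \<times> (nat \<Rightarrow> bit)) pmf" where
  "ff_pmf U r m = pmf_of_set (ff_space U r m)"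

text \<open>Stacked system for v: rows are indexed by pairs (w, j) with w in Gamma(v) (the
  block, in any fixed order) and j < r (row within the block).\<close>
definition stack_mat :: "('b \<Rightarrow> 'a set) \<Rightarrow> ('a \<Rightarrow> (nat \<Rightarrow> nat \<Rightarrow> bit) \<times> (nat \<Rightarrow> bit))
    \<Rightarrow> 'b \<Rightarrow> ('a \<times> nat) \<Rightarrow> nat \<Rightarrow> bit" where
  "stack_mat \<Gamma> \<omega> v = (\<lambda>(w, j) l. fst (\<omega> w) j l)"

definition stack_vec :: "('b \<Rightarrow> 'a set) \<Rightarrow> ('a \<Rightarrow> (nat \<Rightarrow> nat \<Rightarrow> bit) \<times> (nat \<Rightarrow> bit))
    \<Rightarrow> 'b \<Rightarrow> ('a \<times> nat) \<Rightarrow> bit" where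
  "stack_vec \<Gamma> \<omega> v = (\<lambda>(w, j). snd (\<omega> w) j)"

definition survival_set :: "'b set \<Rightarrow> ('b \<Rightarrow> 'a set) \<Rightarrow> nat \<Rightarrow> nat
    \<Rightarrow> ('a \<Rightarrow> (nat \<Rightarrow> nat \<Rightarrow> bit) \<times> (nat \<Rightarrow> bit)) \<Rightarrow> nat \<Rightarrow> 'b set" where
  "survival_set V \<Gamma> r m \<omega> i =
     {v \<in> V. \<forall>row \<in> \<Gamma> v \<times> {0..<r}.
        (\<Sum>l<m. stack_mat \<Gamma> \<omega> v row l * idx_vec m i l) + stack_vec \<Gamma> \<omega> v row = 0}"

end

theory Submission
  imports Defs
begin


declare add_bit_eq_xor[simp del] mult_bit_eq_and[simp del]

lemma bit_add_self[simp]: "(a::bit) + a = 0"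
  by (cases a) simp_all

lemma card_gf2_vecs: "card (gf2_vecs r) = 2 ^ r" and finite_gf2_vecs: "finite (gf2_vecs r)"
proof -
  have b: "bij_betw (\<lambda>b. {j. b j = 1}) (gf2_vecs r) (Pow {..<r})"
  proof (rule bij_betw_byWitness[where f'="\<lambda>X j. if j \<in> X then 1 else 0"])
    show "\<forall>a\<in>gf2_vecs r. (\<lambda>j. if j \<in> {j. a j = 1} then 1 else 0) = a"
      by (auto simp: fun_eq_iff)
    show "\<forall>a'\<in>Pow {..<r}. {j. (if j \<in> a' then 1 else 0) = (1::bit)} = a'"
      by auto
    show "(\<lambda>b. {j. b j = 1}) ` gf2_vecs r \<subseteq> Pow {..<r}"
      by (auto simp: gf2_vecs_def)
    show "(\<lambda>X j. if j \<in> X then 1 else 0) ` Pow {..<r} \<subseteq> gf2_vecs r"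
      by (auto simp: gf2_vecs_def split: if_splits)
  qed
  show "card (gf2_vecs r) = 2 ^ r" using bij_betw_same_card[OF b] by (simp add: card_Pow)
  show "finite (gf2_vecs r)" using bij_betw_finite[OF b] by simp
qed

lemma finite_gf2_mats: "finite (gf2_mats r m)"
proof (rule inj_on_finite[where f="\<lambda>A. {(j,l). A j l = 1}" and B="Pow ({..<r}\<times>{..<m})"])
  show "inj_on (\<lambda>A. {(j, l). A j l = 1}) (gf2_mats r m)"
  proof (rule inj_onI)
    fix A B :: "nat \<Rightarrow> nat \<Rightarrow> bit" assume "{(j, l). A j l = (1::bit)} = {(j, l). B j l = 1}"
    then have "\<forall>j l. A j l = 1 \<longleftrightarrow> B j l = 1" by (auto simp: set_eq_iff)
    then show "A = B" by (auto simp: fun_eq_iff) (metis bit_not_one_iff)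
  qed
  show "(\<lambda>A. {(j, l). A j l = 1}) ` gf2_mats r m \<subseteq> Pow ({..<r} \<times> {..<m})"
    by (auto simp: gf2_mats_def)
qed simp

lemma idx_vec_distinct:
  assumes "i \<in> {1..2^m}" "i' \<in> {1..2^m}" "i \<noteq> i'"
  shows "\<exists>l0<m. idx_vec m i l0 + idx_vec m i' l0 = 1"
proof (rule ccontr)
  assume "\<not> ?thesis"
  then have h: "\<forall>l<m. odd ((i - 1) div 2 ^ l) = odd ((i' - 1) div 2 ^ l)"
    by (auto simp: idx_vec_def split: if_splits)
  have "i - 1 = i' - 1"
  proof (rule bit_eqI)
    fix n
    show "bit (i - 1) n = bit (i' - 1) n"
    proof (cases "n < m")
      case True then show ?thesis using h by (simp add: bit_iff_odd)
    next
      case False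
      then have "(2::nat)^m \<le> 2^n" by simp
      then have "(i - 1) div 2^n = 0" "(i' - 1) div 2^n = 0" using assms by (auto intro!: div_less order.strict_trans2[OF _ \<open>(2::nat)^m \<le> 2^n\<close>])
      then show ?thesis by (simp add: bit_iff_odd)
    qed
  qed
  then show False using assms by auto
qed



lemma bit_add_cancel[simp]: "(a::bit) + b + b = a"
  by (cases a; cases b) simp_all

lemma fiber_card:
  assumes "finite S" "finite R" "g ` S \<subseteq> R"
    and "\<And>s. s \<in> R \<Longrightarrow> bij_betw (h s) {z\<in>S. g z = z0} {z\<in>S. g z = s}"
  shows "card S = card R * card {z\<in>S. g z = z0}"
proof -
  have "S = (\<Union>s\<in>R. {z\<in>S. g z = s})" using assms(3) by auto
  moreover have "card (\<Union>s\<in>R. {z\<in>S. g z = s}) = (\<Sum>s\<in>R. card {z\<in>S. g z = s})"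
    by (rule card_UN_disjoint) (use assms(1,2) in auto)
  ultimately have "card S = (\<Sum>s\<in>R. card {z\<in>S. g z = s})" by simp
  also have "\<dots> = (\<Sum>s\<in>R. card {z\<in>S. g z = z0})"
    by (rule sum.cong[OF refl]) (simp add: bij_betw_same_card[OF assms(4)])
  finally show ?thesis by simp
qed

definition gS :: "nat \<Rightarrow> nat \<Rightarrow> ((nat \<Rightarrow> nat \<Rightarrow> bit) \<times> (nat \<Rightarrow> bit)) set" where
  "gS r m = gf2_mats r m \<times> gf2_vecs r"

definition Cset :: "nat \<Rightarrow> nat \<Rightarrow> (nat \<Rightarrow> bit) \<Rightarrow> ((nat \<Rightarrow> nat \<Rightarrow> bit) \<times> (nat \<Rightarrow> bit)) set" where
  "Cset r m v = {z. \<forall>j<r. (\<Sum>l<m. fst z j l * v l) + snd z j = 0}"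

definition gv :: "nat \<Rightarrow> (nat \<Rightarrow> bit) \<Rightarrow> ((nat \<Rightarrow> nat \<Rightarrow> bit) \<times> (nat \<Rightarrow> bit)) \<Rightarrow> nat \<Rightarrow> bit" where
  "gv m v z = (\<lambda>j. (\<Sum>l<m. fst z j l * v l) + snd z j)"

lemma finite_gS: "finite (gS r m)"
  by (simp add: gS_def finite_gf2_vecs finite_gf2_mats)
lemma gS_ne: "gS r m \<noteq> {}"
proof -
  have "((\<lambda>_ _. 0), (\<lambda>_. 0)) \<in> gS r m" by (simp add: gS_def gf2_mats_def gf2_vecs_def)
  then show ?thesis by blast
qed

lemma mats_zero: "A \<in> gf2_mats r m \<Longrightarrow> \<not> j < r \<Longrightarrow> A j l = 0"
  unfolding gf2_mats_def by blast
lemma vecs_zero: "b \<in> gf2_vecs r \<Longrightarrow> \<not> j < r \<Longrightarrow> b j = 0"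
  unfolding gf2_vecs_def by blast

lemma gv_out: assumes "z \<in> gS r m" "\<not> j < r" shows "gv m v z j = 0"
proof -
  have "fst z \<in> gf2_mats r m" "snd z \<in> gf2_vecs r" using assms(1) by (auto simp: gS_def)
  then have "\<forall>l. fst z j l = 0" "snd z j = 0" using mats_zero vecs_zero assms(2) by blast+
  then show ?thesis by (simp add: gv_def)
qed

lemma gv_in: "z \<in> gS r m \<Longrightarrow> gv m v z \<in> gf2_vecs r"
  unfolding gf2_vecs_def using gv_out by blast

lemma Cset_gv: "z \<in> gS r m \<Longrightarrow> z \<in> Cset r m v \<longleftrightarrow> gv m v z = (\<lambda>_. 0)"
  unfolding Cset_def fun_eq_iff using gv_out[of z r m _ v] by (auto simp: gv_def)

lemma prob_C: "measure_pmf.prob (pmf_of_set (gS r m)) (Cset r m v) = 1 / 2 ^ r"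
proof -
  let ?h = "\<lambda>(s::nat\<Rightarrow>bit) (z::(nat \<Rightarrow> nat \<Rightarrow> bit) \<times> (nat \<Rightarrow> bit)). (fst z, \<lambda>j. snd z j + s j)"
  have gvh: "gv m v (?h s z) = (\<lambda>j. gv m v z j + s j)" for s z
    by (simp add: gv_def add.assoc)
  have hh: "?h s (?h s z) = z" for s z by (simp add: fun_eq_iff)
  have hS: "s \<in> gf2_vecs r \<Longrightarrow> z \<in> gS r m \<Longrightarrow> ?h s z \<in> gS r m" for s z
  proof -
    assume s: "s \<in> gf2_vecs r" and z: "z \<in> gS r m"
    have "snd z \<in> gf2_vecs r" "fst z \<in> gf2_mats r m" using z by (auto simp: gS_def)
    have "snd z j + s j = 0" if "\<not> j < r" for j
      using vecs_zero[OF \<open>snd z \<in> gf2_vecs r\<close> that] vecs_zero[OF s that] by simp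
    then have "\<forall>j. snd z j + s j \<noteq> 0 \<longrightarrow> j < r" by blast
    then show ?thesis using \<open>fst z \<in> gf2_mats r m\<close> by (simp add: gS_def gf2_vecs_def)
  qed
  have c: "card (gS r m) = card (gf2_vecs r) * card {z\<in>gS r m. gv m v z = (\<lambda>_. 0)}"
  proof (rule fiber_card[where h="?h"])
    fix s assume s: "s \<in> gf2_vecs r"
    show "bij_betw (?h s) {z \<in> gS r m. gv m v z = (\<lambda>_. 0)} {z \<in> gS r m. gv m v z = s}"
    proof (rule bij_betw_byWitness[where f'="?h s"])
      show "\<forall>a\<in>{z \<in> gS r m. gv m v z = (\<lambda>_. 0)}. ?h s (?h s a) = a" using hh by blast
      show "\<forall>a\<in>{z \<in> gS r m. gv m v z = s}. ?h s (?h s a) = a" using hh by blast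
      show "?h s ` {z \<in> gS r m. gv m v z = (\<lambda>_. 0)} \<subseteq> {z \<in> gS r m. gv m v z = s}"
      proof (rule image_subsetI)
        fix z assume "z \<in> {z \<in> gS r m. gv m v z = (\<lambda>_. 0)}"
        then have z: "z \<in> gS r m" "gv m v z = (\<lambda>_. 0)" by auto
        have "gv m v (?h s z) = s" unfolding gvh z(2) by simp
        then show "?h s z \<in> {z \<in> gS r m. gv m v z = s}" using hS[OF s z(1)] by simp
      qed
      show "?h s ` {z \<in> gS r m. gv m v z = s} \<subseteq> {z \<in> gS r m. gv m v z = (\<lambda>_. 0)}"
      proof (rule image_subsetI)
        fix z assume "z \<in> {z \<in> gS r m. gv m v z = s}"
        then have z: "z \<in> gS r m" "gv m v z = s" by auto
        have "gv m v (?h s z) = (\<lambda>_. 0)" unfolding gvh z(2) by simp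
        then show "?h s z \<in> {z \<in> gS r m. gv m v z = (\<lambda>_. 0)}" using hS[OF s z(1)] by simp
      qed
    qed
  qed (auto simp: finite_gS finite_gf2_vecs gv_in)
  define F where "F = {z\<in>gS r m. gv m v z = (\<lambda>_. 0)}"
  have eqF: "gS r m \<inter> Cset r m v = F" using Cset_gv unfolding F_def by blast
  have "card (gS r m) > 0" using finite_gS gS_ne by (simp add: card_gt_0_iff)
  then have c2: "card (gS r m) = 2 ^ r * card F" "card F > 0" using c unfolding F_def card_gf2_vecs by auto
  have "measure_pmf.prob (pmf_of_set (gS r m)) (Cset r m v) = real (card F) / real (card (gS r m))"
    using measure_pmf_of_set[OF gS_ne finite_gS, where A="Cset r m v"] eqF by simp
  also have "\<dots> = 1 / 2 ^ r" using c2 by (simp add: field_simps)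
  finally show ?thesis .
qed

lemma bit_id1: "(x::bit) + y + (b + s + y) = x + b + s"
  by (cases x; cases y; cases b; cases s) simp_all
lemma bit_id2: "w0 + w1 = (1::bit) \<Longrightarrow> (x::bit) + (s1+s2)*w1 + (b + s1 + (s1+s2)*w0) = x + b + s2"
  by (cases x; cases w0; cases w1; cases s1; cases s2; cases b) simp_all
lemma bit_id3: "(b::bit) + s + y + s + y = b"
  by (cases b; cases y; cases s) simp_all

lemma sum_delta_bit: "l0 < (m::nat) \<Longrightarrow> (\<Sum>l<m. (A l + (if l = l0 then c else 0)) * v l) = (\<Sum>l<m. A l * v l) + c * (v l0::bit)"
proof -
  assume l0: "l0 < m"
  have "(\<Sum>l<m. (A l + (if l = l0 then c else 0)) * v l) = (\<Sum>l<m. A l * v l + (if l = l0 then c * v l else 0))"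
    by (rule sum.cong) (simp_all add: distrib_right)
  also have "\<dots> = (\<Sum>l<m. A l * v l) + (\<Sum>l<m. (if l = l0 then c * v l else 0))"
    by (rule sum.distrib)
  also have "(\<Sum>l<m. (if l = l0 then c * v l else 0)) = c * v l0"
    using l0 by (subst sum.delta) auto
  finally show ?thesis .
qed

lemma prob_C2:
  assumes l0: "l0 < m" and vv: "v l0 + v' l0 = 1"
  shows "measure_pmf.prob (pmf_of_set (gS r m)) (Cset r m v \<inter> Cset r m v') = 1 / (2 ^ r * 2 ^ r)"
proof -
  let ?h = "\<lambda>(s::(nat\<Rightarrow>bit)\<times>(nat\<Rightarrow>bit)) (z::(nat \<Rightarrow> nat \<Rightarrow> bit) \<times> (nat \<Rightarrow> bit)).
     (\<lambda>j l. fst z j l + (if l = l0 then fst s j + snd s j else 0),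
      \<lambda>j. snd z j + fst s j + (fst s j + snd s j) * v l0)"
  let ?g = "\<lambda>z. (gv m v z, gv m v' z)"
  have gvh1: "gv m v (?h s z) = (\<lambda>j. gv m v z j + fst s j)" for s z
    unfolding gv_def by (simp add: sum_delta_bit[OF l0] bit_id1 add.assoc)
  have gvh2: "gv m v' (?h s z) = (\<lambda>j. gv m v' z j + snd s j)" for s z
    unfolding gv_def fun_eq_iff by (simp add: sum_delta_bit[OF l0] bit_id2[OF vv])
  have hh: "?h s (?h s z) = z" for s z by (simp add: fun_eq_iff bit_id3)
  have hS: "s \<in> gf2_vecs r \<times> gf2_vecs r \<Longrightarrow> z \<in> gS r m \<Longrightarrow> ?h s z \<in> gS r m" for s z
  proof -
    assume s: "s \<in> gf2_vecs r \<times> gf2_vecs r" and z: "z \<in> gS r m"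
    have zz: "snd z \<in> gf2_vecs r" "fst z \<in> gf2_mats r m" using z by (auto simp: gS_def)
    have ss: "fst s \<in> gf2_vecs r" "snd s \<in> gf2_vecs r" using s by auto
    have "snd z j + fst s j + (fst s j + snd s j) * v l0 = 0" if "\<not> j < r" for j
      using vecs_zero[OF zz(1) that] vecs_zero[OF ss(1) that] vecs_zero[OF ss(2) that] by simp
    then have 1: "\<forall>j. snd z j + fst s j + (fst s j + snd s j) * v l0 \<noteq> 0 \<longrightarrow> j < r" by blast
    have "fst z j l + (if l = l0 then fst s j + snd s j else 0) = 0" if "\<not> (j < r \<and> l < m)" for j l
    proof (cases "l = l0")
      case True
      then have "\<not> j < r" using that l0 by auto
      then show ?thesis using True mats_zero[OF zz(2)] vecs_zero[OF ss(1)] vecs_zero[OF ss(2)] by simp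
    next
      case False
      have "fst z j l = 0" using zz(2) that unfolding gf2_mats_def by blast
      then show ?thesis using False by simp
    qed
    then have 2: "\<forall>j l. fst z j l + (if l = l0 then fst s j + snd s j else 0) \<noteq> 0 \<longrightarrow> j < r \<and> l < m" by blast
    show ?thesis using 1 2 by (simp add: gS_def gf2_vecs_def gf2_mats_def)
  qed
  have gin: "?g ` gS r m \<subseteq> gf2_vecs r \<times> gf2_vecs r" using gv_in by blast
  have c: "card (gS r m) = card (gf2_vecs r \<times> gf2_vecs r) * card {z\<in>gS r m. ?g z = ((\<lambda>_. 0), (\<lambda>_. 0))}"
  proof (rule fiber_card[where h="?h"])
    fix s assume s: "s \<in> gf2_vecs r \<times> gf2_vecs r"
    show "bij_betw (?h s) {z \<in> gS r m. ?g z = ((\<lambda>_. 0), (\<lambda>_. 0))} {z \<in> gS r m. ?g z = s}"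
    proof (rule bij_betw_byWitness[where f'="?h s"])
      show "\<forall>a\<in>{z \<in> gS r m. ?g z = ((\<lambda>_. 0), (\<lambda>_. 0))}. ?h s (?h s a) = a" using hh by blast
      show "\<forall>a\<in>{z \<in> gS r m. ?g z = s}. ?h s (?h s a) = a" using hh by blast
      show "?h s ` {z \<in> gS r m. ?g z = ((\<lambda>_. 0), (\<lambda>_. 0))} \<subseteq> {z \<in> gS r m. ?g z = s}"
      proof (rule image_subsetI)
        fix z assume "z \<in> {z \<in> gS r m. ?g z = ((\<lambda>_. 0), (\<lambda>_. 0))}"
        then have z: "z \<in> gS r m" "gv m v z = (\<lambda>_. 0)" "gv m v' z = (\<lambda>_. 0)" by auto
        have "?g (?h s z) = s" unfolding gvh1 gvh2 z(2,3) by simp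
        then show "?h s z \<in> {z \<in> gS r m. ?g z = s}" using hS[OF s z(1)] by simp
      qed
      show "?h s ` {z \<in> gS r m. ?g z = s} \<subseteq> {z \<in> gS r m. ?g z = ((\<lambda>_. 0), (\<lambda>_. 0))}"
      proof (rule image_subsetI)
        fix z assume "z \<in> {z \<in> gS r m. ?g z = s}"
        then have z: "z \<in> gS r m" "gv m v z = fst s" "gv m v' z = snd s" by auto
        have "?g (?h s z) = ((\<lambda>_. 0), (\<lambda>_. 0))" unfolding gvh1 gvh2 z(2,3) by simp
        then show "?h s z \<in> {z \<in> gS r m. ?g z = ((\<lambda>_. 0), (\<lambda>_. 0))}" using hS[OF s z(1)] by simp
      qed
    qed
  qed (use gin in \<open>auto simp: finite_gS finite_gf2_vecs\<close>)
  define F where "F = {z\<in>gS r m. ?g z = ((\<lambda>_. 0), (\<lambda>_. 0))}"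
  have eqF: "gS r m \<inter> (Cset r m v \<inter> Cset r m v') = F" using Cset_gv unfolding F_def by blast
  have "card (gS r m) > 0" using finite_gS gS_ne by (simp add: card_gt_0_iff)
  then have c2: "card (gS r m) = 2 ^ r * 2 ^ r * card F" "card F > 0"
    using c unfolding F_def card_cartesian_product card_gf2_vecs by auto
  have "measure_pmf.prob (pmf_of_set (gS r m)) (Cset r m v \<inter> Cset r m v') = real (card F) / real (card (gS r m))"
    using measure_pmf_of_set[OF gS_ne finite_gS, where A="Cset r m v \<inter> Cset r m v'"] eqF by simp
  also have "\<dots> = 1 / (2 ^ r * 2 ^ r)" using c2 by (simp add: field_simps)
  finally show ?thesis .
qed



lemma second_moment:
  fixes M :: "'a pmf" and I :: "nat set" and Ev :: "nat \<Rightarrow> 'a set" and p :: real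
  assumes fin: "finite (set_pmf M)" and I: "finite I"
    and p1: "\<And>i. i \<in> I \<Longrightarrow> measure_pmf.prob M (Ev i) = p"
    and p2: "\<And>i j. i \<in> I \<Longrightarrow> j \<in> I \<Longrightarrow> i \<noteq> j \<Longrightarrow> measure_pmf.prob M (Ev i \<inter> Ev j) = p ^ 2"
    and big: "real (card I) * p \<ge> 2"
  shows "measure_pmf.prob M {\<omega>. \<exists>i\<in>I. \<omega> \<in> Ev i} \<ge> 1 / 2"
proof -
  define X where "X = (\<lambda>\<omega>. \<Sum>i\<in>I. indicator (Ev i) \<omega> :: real)"
  define n where "n = real (card I)"
  define \<mu> where "\<mu> = n * p"
  have intg: "integrable M f" for f :: "'a \<Rightarrow> real" using fin by (rule integrable_measure_pmf_finite)
  have p0: "p \<ge> 0" using big mult_nonneg_nonpos[of "real (card I)" p] by fastforce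
  have EX: "measure_pmf.expectation M X = \<mu>"
  proof -
    have "measure_pmf.expectation M X = (\<Sum>i\<in>I. measure_pmf.expectation M (indicator (Ev i)))"
      unfolding X_def by (subst Bochner_Integration.integral_sum) (simp_all add: intg)
    also have "\<dots> = (\<Sum>i\<in>I. p)" using p1 by simp
    finally show ?thesis by (simp add: \<mu>_def n_def)
  qed
  have X2: "(X \<omega>)^2 = (\<Sum>i\<in>I. \<Sum>j\<in>I. indicator (Ev i \<inter> Ev j) \<omega>)" for \<omega>
    unfolding X_def power2_eq_square sum_product by (simp add: indicator_inter_arith)
  have inner: "(\<Sum>j\<in>I. measure_pmf.prob M (Ev i \<inter> Ev j)) = p + (n - 1) * p^2" if i: "i \<in> I" for i
  proof -
    have "(\<Sum>j\<in>I. measure_pmf.prob M (Ev i \<inter> Ev j)) =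
          measure_pmf.prob M (Ev i \<inter> Ev i) + (\<Sum>j\<in>I - {i}. measure_pmf.prob M (Ev i \<inter> Ev j))"
      using I i by (simp add: sum.remove)
    also have "(\<Sum>j\<in>I - {i}. measure_pmf.prob M (Ev i \<inter> Ev j)) = (\<Sum>j\<in>I - {i}. p^2)"
      using p2 i by (intro sum.cong) auto
    also have "\<dots> = (n - 1) * p^2"
    proof -
      have "card I \<ge> 1" using I i by (metis One_nat_def Suc_leI card_gt_0_iff empty_iff)
      then show ?thesis using I i by (simp add: n_def of_nat_diff)
    qed
    finally show ?thesis using p1 i by simp
  qed
  have EX2: "measure_pmf.expectation M (\<lambda>\<omega>. (X \<omega>)^2) = n * (p + (n - 1) * p^2)"
  proof -
    have "measure_pmf.expectation M (\<lambda>\<omega>. (X \<omega>)^2) =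
          measure_pmf.expectation M (\<lambda>\<omega>. \<Sum>i\<in>I. \<Sum>j\<in>I. indicator (Ev i \<inter> Ev j) \<omega>)"
      by (simp add: X2)
    also have "\<dots> = (\<Sum>i\<in>I. measure_pmf.expectation M (\<lambda>\<omega>. \<Sum>j\<in>I. indicator (Ev i \<inter> Ev j) \<omega>))"
      by (subst Bochner_Integration.integral_sum) (simp_all add: intg)
    also have "\<dots> = (\<Sum>i\<in>I. \<Sum>j\<in>I. measure_pmf.prob M (Ev i \<inter> Ev j))"
    proof (rule sum.cong[OF refl])
      fix i
      have "measure_pmf.expectation M (\<lambda>\<omega>. \<Sum>j\<in>I. indicator (Ev i \<inter> Ev j) \<omega> :: real)
            = (\<Sum>j\<in>I. measure_pmf.expectation M (indicator (Ev i \<inter> Ev j)))"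
        by (subst Bochner_Integration.integral_sum) (simp_all add: intg)
      then show "measure_pmf.expectation M (\<lambda>\<omega>. \<Sum>j\<in>I. indicator (Ev i \<inter> Ev j) \<omega>)
            = (\<Sum>j\<in>I. measure_pmf.prob M (Ev i \<inter> Ev j))" by simp
    qed
    also have "\<dots> = (\<Sum>i\<in>I. p + (n - 1) * p^2)" using inner by (intro sum.cong) auto
    finally show ?thesis by (simp add: n_def)
  qed
  have var: "measure_pmf.expectation M (\<lambda>\<omega>. (X \<omega> - \<mu>)^2) = \<mu> - n * p^2"
  proof -
    have "(\<lambda>\<omega>. (X \<omega> - \<mu>)^2) = (\<lambda>\<omega>. ((X \<omega>)^2 + (- 2 * \<mu>) * X \<omega>) + \<mu>^2)"
      by (simp add: fun_eq_iff power2_eq_square algebra_simps)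
    then have "measure_pmf.expectation M (\<lambda>\<omega>. (X \<omega> - \<mu>)^2) =
        (measure_pmf.expectation M (\<lambda>\<omega>. (X \<omega>)^2) + (- 2 * \<mu>) * measure_pmf.expectation M X) + \<mu>^2"
      by (simp add: intg)
    also have "\<dots> = \<mu> - n * p^2" unfolding EX2 EX \<mu>_def by (simp add: power2_eq_square algebra_simps)
    finally show ?thesis .
  qed
  define Z where "Z = UNIV - {\<omega>. \<exists>i\<in>I. \<omega> \<in> Ev i}"
  have pt: "\<mu>^2 * indicator Z \<omega> \<le> (X \<omega> - \<mu>)^2" for \<omega>
  proof (cases "\<omega> \<in> Z")
    case True
    then have "X \<omega> = 0" unfolding X_def Z_def by (auto intro!: sum.neutral)
    then show ?thesis using True by simp
  qed simp
  have "measure_pmf.expectation M (\<lambda>\<omega>. \<mu>^2 * indicator Z \<omega>) \<le> measure_pmf.expectation M (\<lambda>\<omega>. (X \<omega> - \<mu>)^2)"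
    by (rule integral_mono) (auto simp: intg pt)
  then have "\<mu>^2 * measure_pmf.prob M Z \<le> \<mu> - n * p^2" unfolding var by simp
  also have "\<dots> \<le> \<mu>" using p0 n_def by simp
  finally have "\<mu>^2 * measure_pmf.prob M Z \<le> \<mu>" .
  moreover have "\<mu> \<ge> 2" using big \<mu>_def n_def by simp
  ultimately have "\<mu> * measure_pmf.prob M Z \<le> 1"
    by (simp add: power2_eq_square mult.assoc)
  then have "measure_pmf.prob M Z \<le> 1/2" using \<open>\<mu> \<ge> 2\<close>
  proof -
    have "2 * measure_pmf.prob M Z \<le> \<mu> * measure_pmf.prob M Z"
      by (rule mult_right_mono) (use \<open>\<mu> \<ge> 2\<close> in auto)
    then show ?thesis using \<open>\<mu> * measure_pmf.prob M Z \<le> 1\<close> by linarith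
  qed
  moreover have "measure_pmf.prob M Z = 1 - measure_pmf.prob M {\<omega>. \<exists>i\<in>I. \<omega> \<in> Ev i}"
    unfolding Z_def using measure_pmf.prob_compl[of "{\<omega>. \<exists>i\<in>I. \<omega> \<in> Ev i}" M] by simp
  ultimately show ?thesis by simp
qed



lemma prob_Pi_T:
  assumes "finite U" "T \<subseteq> U"
  shows "measure_pmf.prob (Pi_pmf U d (\<lambda>_. P)) {\<omega>. \<forall>w\<in>T. \<omega> w \<in> C} = measure_pmf.prob P C ^ card T"
proof -
  have "{\<omega>. \<forall>w\<in>T. \<omega> w \<in> C} = Pi U (\<lambda>w. if w \<in> T then C else UNIV)"
    using assms(2) by (auto simp: Pi_def)
  then have "measure_pmf.prob (Pi_pmf U d (\<lambda>_. P)) {\<omega>. \<forall>w\<in>T. \<omega> w \<in> C}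
      = (\<Prod>w\<in>U. measure_pmf.prob P (if w \<in> T then C else UNIV))"
    using measure_Pi_pmf_Pi[OF assms(1)] by simp
  also have "\<dots> = (\<Prod>w\<in>U. if w \<in> T then measure_pmf.prob P C else 1)"
    by (rule prod.cong) auto
  also have "\<dots> = (\<Prod>w\<in>{w\<in>U. w \<in> T}. measure_pmf.prob P C)"
    using prod.inter_filter[OF assms(1), of "\<lambda>_. measure_pmf.prob P C" "\<lambda>w. w \<in> T"] by simp
  also have "{w\<in>U. w \<in> T} = T" using assms(2) by auto
  finally show ?thesis by simp
qed

lemma ff_pmf_Pi: "finite U \<Longrightarrow> ff_pmf U r m = Pi_pmf U undefined (\<lambda>_. pmf_of_set (gS r m))"
proof -
  assume U: "finite U"
  have "Pi_pmf U undefined (\<lambda>_. pmf_of_set (gS r m)) = pmf_of_set (PiE_dflt U undefined (\<lambda>_. gS r m))"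
    by (rule Pi_pmf_of_set) (simp_all add: U finite_gS gS_ne)
  also have "PiE_dflt U undefined (\<lambda>_. gS r m) = ff_space U r m"
    by (auto simp: PiE_dflt_def ff_space_def PiE_def extensional_def gS_def)
  finally show ?thesis by (simp add: ff_pmf_def)
qed

lemma survival_iff:
  "v \<in> V \<Longrightarrow> v \<in> survival_set V \<Gamma> r m \<omega> i \<longleftrightarrow> (\<forall>w\<in>\<Gamma> v. \<omega> w \<in> Cset r m (idx_vec m i))"
  by (auto simp: survival_set_def stack_mat_def stack_vec_def Cset_def)



theorem mainTheorem4:
  fixes U :: "'a set" and V :: "'b set" and \<Gamma> :: "'b \<Rightarrow> 'a set"
    and d m r k :: nat and \<alpha> \<tau> :: real and x y :: 'b
  assumes "finite U" and "finite V"
    and "\<forall>v\<in>V. \<Gamma> v \<subseteq> U"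
    and "\<forall>v\<in>V. card (\<Gamma> v) = d" and "d \<ge> 1"
    and "m > 0" and "r > 0"
    and "k = 2 ^ m" and "\<alpha> = 2 powr (- real r)"
    and "0 < \<tau>" and "\<tau> \<le> 1"
    and "real k * \<alpha> powr ((2 - \<tau>) * real d) \<ge> 2"
    and "x \<in> V" and "y \<in> V" and "x \<noteq> y"
    and "real (card (\<Gamma> x \<inter> \<Gamma> y)) \<ge> \<tau> * real d"
  shows "measure_pmf.prob (ff_pmf U r m)
           {\<omega>. \<exists>i\<in>{1..k}. x \<in> survival_set V \<Gamma> r m \<omega> i \<and> y \<in> survival_set V \<Gamma> r m \<omega> i}
         \<ge> 1 / 2"
proof -
  note U = assms(1)
  define T where "T = \<Gamma> x \<union> \<Gamma> y"
  have TU: "T \<subseteq> U" using assms(3,13,14) by (auto simp: T_def)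
  have finx: "finite (\<Gamma> x)" "finite (\<Gamma> y)" using assms(3,13,14) U finite_subset by blast+
  define t where "t = card T"
  have "card T + card (\<Gamma> x \<inter> \<Gamma> y) = card (\<Gamma> x) + card (\<Gamma> y)"
    unfolding T_def using card_Un_Int[OF finx] by simp
  then have "real t + real (card (\<Gamma> x \<inter> \<Gamma> y)) = 2 * real d"
    using assms(4,13,14) unfolding t_def by simp
  then have tle: "real t \<le> (2 - \<tau>) * real d" using assms(16) by (simp add: algebra_simps)
  define P where "P = pmf_of_set (gS r m)"
  define Ev where "Ev = (\<lambda>i::nat. {\<omega>::'a \<Rightarrow> _. \<forall>w\<in>T. \<omega> w \<in> Cset r m (idx_vec m i)})"
  define p :: real where "p = (1 / 2 ^ r) ^ t"
  have M: "ff_pmf U r m = Pi_pmf U undefined (\<lambda>_. P)" unfolding P_def by (rule ff_pmf_Pi[OF U])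
  have setEq: "{\<omega>. \<exists>i\<in>{1..k}. x \<in> survival_set V \<Gamma> r m \<omega> i \<and> y \<in> survival_set V \<Gamma> r m \<omega> i}
       = {\<omega>. \<exists>i\<in>{1..k}. \<omega> \<in> Ev i}"
    unfolding Ev_def T_def by (auto simp add: survival_iff[OF assms(13)] survival_iff[OF assms(14)])
  have sp: "ff_space U r m = PiE U (\<lambda>_. gS r m)" by (simp add: ff_space_def gS_def)
  have ne: "ff_space U r m \<noteq> {}" unfolding sp using gS_ne by (simp add: PiE_eq_empty_iff)
  have fs: "finite (ff_space U r m)" unfolding sp using U finite_gS by (intro finite_PiE) auto
  have fin: "finite (set_pmf (ff_pmf U r m))"
    unfolding ff_pmf_def using set_pmf_of_set[OF ne fs] fs by simp
  show ?thesis unfolding setEq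
  proof (rule second_moment[where p = p])
    show "finite (set_pmf (ff_pmf U r m))" by (rule fin)
    show "finite {1..k}" by simp
    show "measure_pmf.prob (ff_pmf U r m) (Ev i) = p" if "i \<in> {1..k}" for i
      unfolding M Ev_def prob_Pi_T[OF U TU] P_def prob_C p_def t_def ..
    show "measure_pmf.prob (ff_pmf U r m) (Ev i \<inter> Ev j) = p ^ 2"
      if ij: "i \<in> {1..k}" "j \<in> {1..k}" "i \<noteq> j" for i j
    proof -
      obtain l0 where l0: "l0 < m" "idx_vec m i l0 + idx_vec m j l0 = 1"
        using idx_vec_distinct[of i m j] ij assms(8) by auto
      have eq: "Ev i \<inter> Ev j = {\<omega>. \<forall>w\<in>T. \<omega> w \<in> Cset r m (idx_vec m i) \<inter> Cset r m (idx_vec m j)}"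
        unfolding Ev_def by auto
      have gen: "(1 / (a * a)) ^ n = ((1 / a) ^ n) ^ 2" for a :: real and n :: nat
        by (simp add: power2_eq_square power_mult_distrib[symmetric])
      have "measure_pmf.prob (ff_pmf U r m) (Ev i \<inter> Ev j)
          = measure_pmf.prob P (Cset r m (idx_vec m i) \<inter> Cset r m (idx_vec m j)) ^ t"
        unfolding eq M t_def by (rule prob_Pi_T[OF U TU])
      also have "\<dots> = (1 / (2 ^ r * 2 ^ r)) ^ t"
        unfolding P_def prob_C2[where v="idx_vec m i" and v'="idx_vec m j", OF l0] ..
      also have "\<dots> = p ^ 2" unfolding p_def by (rule gen)
      finally show ?thesis .
    qed
    show "real (card {1..k}) * p \<ge> 2"
    proof -
      have a: "\<alpha> powr ((2 - \<tau>) * real d) = 2 powr (- (real r * ((2 - \<tau>) * real d)))"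
        using assms(9) by (simp add: powr_powr)
      have b: "p = 2 powr (- (real r * real t))"
        unfolding p_def by (simp add: powr_minus powr_realpow power_mult power_one_over divide_inverse power_inverse
            flip: of_nat_mult)
      have "2 powr (- (real r * ((2 - \<tau>) * real d))) \<le> 2 powr (- (real r * real t))"
        using tle by (intro powr_mono) (auto intro: mult_left_mono)
      then have "real k * \<alpha> powr ((2 - \<tau>) * real d) \<le> real k * p"
        unfolding a b by (intro mult_left_mono) auto
      then show ?thesis using assms(12) by simp
    qed
  qed
qed

end
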